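(* Let $n,r\ge1$, let $M\in\mathbb{F}[x]^{r\times r}$ and $N\in\mathbb{F}[y]^{r\times r}$ have all entries of degree $<n$, and let $\omega\in\mathbb{F}$ have multiplicative order $\ge n^2$. Then for every $\alpha\in\mathbb{F}$, $$\mathrm{span}\{\mathrm{coeff}_{x^iy^j}(M(x)N(y))\}_{0\le i,j<n}\supseteq\mathrm{span}\{M(\omega^\ell\alpha)N((\omega^\ell\alpha)^n)\}_{0\le\ell<r^2},$$ and for all but fewer than $n^2r^2$ values of $\alpha\in\mathbb{F}$ these two spans are equal.
   Context: For a matrix $P$ with polynomial entries, $\mathrm{coeff}_{x^iy^j}(P)$ is the scalar matrix obtained by taking the coefficient of the monomial $x^iy^j$ in each entry. Spans are $\mathbb{F}$-linear spans in $\mathbb{F}^{r\times r}$. *)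

theory Defs
  imports "HOL-Analysis.Analysis" "HOL-Computational_Algebra.Polynomial"
begin

text \<open>r x r matrices are indexed by a finite type 'r, with r = CARD('r) (so r >= 1 automatically).\<close>

definition mat_scale :: "'a::field \<Rightarrow> 'a^'r^'r \<Rightarrow> 'a^'r^'r" where
  "mat_scale c A = (\<chi> a b. c * A$a$b)"

definition mat_span :: "('a::field^'r^'r) set \<Rightarrow> ('a^'r^'r) set" where
  "mat_span S = module.span mat_scale S"

definition ord_ge :: "'a::field \<Rightarrow> nat \<Rightarrow> bool" where
  "ord_ge w m \<longleftrightarrow> w \<noteq> 0 \<and> (\<forall>k. 0 < k \<and> k < m \<longrightarrow> w ^ k \<noteq> 1)"

text \<open>Bivariate polynomials in F[x,y] are represented as elements of (F[x])[y],
  i.e. type 'a poly poly: outer variable y, inner variable x.\<close>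
definition polyX :: "'a::comm_ring_1 poly \<Rightarrow> 'a poly poly" where
  "polyX p = [:p:]"

definition polyY :: "'a::comm_ring_1 poly \<Rightarrow> 'a poly poly" where
  "polyY p = map_poly (\<lambda>c. [:c:]) p"

definition prodXY :: "'a::comm_ring_1 poly^'r^'r \<Rightarrow> 'a poly^'r^'r \<Rightarrow> 'a poly poly^'r^'r" where
  "prodXY M N = (\<chi> a b. polyX (M$a$b)) ** (\<chi> a b. polyY (N$a$b))"

definition coeff_xy :: "'a::comm_ring_1 poly poly^'r^'r \<Rightarrow> nat \<Rightarrow> nat \<Rightarrow> 'a^'r^'r" where
  "coeff_xy P i j = (\<chi> a b. coeff (coeff (P$a$b) j) i)"

definition eval_mat :: "'a::comm_ring_1 poly^'r^'r \<Rightarrow> 'a \<Rightarrow> 'a^'r^'r" where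
  "eval_mat M z = (\<chi> a b. poly (M$a$b) z)"

end

theory Submission
  imports Defs "Jordan_Normal_Form.Determinant"
begin


no_notation Matrix.vec_index (infixl "$" 100)

lemma ms_vs: "vector_space (mat_scale :: 'a::field \<Rightarrow> 'a^'r^'r \<Rightarrow> _)"
  by unfold_locales (simp_all add: mat_scale_def Finite_Cartesian_Product.vec_eq_iff algebra_simps)

global_interpretation MS: vector_space "mat_scale :: 'a::field \<Rightarrow> 'a^'r^'r \<Rightarrow> _"
  by (rule ms_vs)

lemma mat_span_eq: "mat_span S = MS.span S"
  by (simp add: mat_span_def)

definition Emat :: "'r \<Rightarrow> 'r \<Rightarrow> 'a::field^'r^'r" where
  "Emat a b = (\<chi> i j. if i = a \<and> j = b then 1 else 0)"

lemma mat_decomp: "(A::'a::field^'r^'r) = (\<Sum>a\<in>UNIV. \<Sum>b\<in>UNIV. mat_scale (A$a$b) (Emat a b))"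
proof -
  have h: "(\<Sum>xa\<in>UNIV. if i = x \<and> j = xa then A$x$xa else 0) = (if i = x then A$x$j else 0)"
    for i j x by (cases "i = x") auto
  show ?thesis
    by (simp add: Finite_Cartesian_Product.vec_eq_iff mat_scale_def Emat_def if_distrib h cong: if_cong)
qed

lemma indep_card:
  assumes "\<not> MS.dependent (X :: ('a::field^'r^'r) set)"
  shows "finite X \<and> card X \<le> CARD('r)^2"
proof -
  let ?T = "(\<lambda>(a,b). Emat a b :: 'a^'r^'r) ` UNIV"
  have fin: "finite ?T" by simp
  have "X \<subseteq> MS.span ?T"
  proof
    fix A :: "'a^'r^'r" assume "A \<in> X"
    have "(\<Sum>a\<in>UNIV. \<Sum>b\<in>UNIV. mat_scale (A$a$b) (Emat a b)) \<in> MS.span ?T"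
      by (intro MS.span_sum MS.span_scale MS.span_base) auto
    then show "A \<in> MS.span ?T" using mat_decomp[of A] by simp
  qed
  from MS.independent_span_bound[OF fin assms this]
  have "finite X \<and> card X \<le> card ?T" .
  moreover have "card ?T \<le> CARD('r)^2"
    using card_image_le[of UNIV "\<lambda>(a,b). Emat a b :: 'a^'r^'r"]
    by (simp add: power2_eq_square)
  ultimately show ?thesis by simp
qed

lemma echelon:
  fixes C :: "nat \<Rightarrow> 'a::field^'r^'r"
  shows "\<exists>S c. S \<subseteq> {..<N} \<and> inj_on C S \<and> \<not> MS.dependent (C ` S)
     \<and> (\<forall>k<N. C k = (\<Sum>s\<in>S. mat_scale (c s k) (C s)))
     \<and> (\<forall>s\<in>S. c s s = 1 \<and> (\<forall>k<s. c s k = 0))"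
proof (induction N)
  case 0
  show ?case by (rule exI[of _ "{}"]) (auto simp: MS.independent_empty)
next
  case (Suc N)
  then obtain S c where S: "S \<subseteq> {..<N}" and inj: "inj_on C S" and ind: "\<not> MS.dependent (C ` S)"
    and rep: "\<forall>k<N. C k = (\<Sum>s\<in>S. mat_scale (c s k) (C s))"
    and nrm: "\<forall>s\<in>S. c s s = 1 \<and> (\<forall>k<s. c s k = 0)" by blast
  have finS: "finite S" using S finite_subset by blast
  show ?case
  proof (cases "C N \<in> MS.span (C ` S)")
    case True
    then obtain u where u: "C N = (\<Sum>v\<in>C ` S. mat_scale (u v) v)"
      using MS.span_finite[of "C ` S"] finS by auto
    also have "\<dots> = (\<Sum>s\<in>S. mat_scale (u (C s)) (C s))"
      by (subst sum.reindex[OF inj]) simp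
    finally have u': "C N = (\<Sum>s\<in>S. mat_scale (u (C s)) (C s))" .
    define c' where "c' s k = (if k = N then u (C s) else c s k)" for s k
    show ?thesis
    proof (intro exI[of _ S] exI[of _ c'] conjI)
      show "S \<subseteq> {..<Suc N}" using S by auto
      show "\<forall>k<Suc N. C k = (\<Sum>s\<in>S. mat_scale (c' s k) (C s))"
        using rep u' by (auto simp: c'_def less_Suc_eq)
      show "\<forall>s\<in>S. c' s s = 1 \<and> (\<forall>k<s. c' s k = 0)"
        using nrm S by (auto simp: c'_def)
    qed (use inj ind in auto)
  next
    case False
    define c' where "c' s k = (if s = N then (if k = N then 1 else 0) else (if k = N then 0 else c s k))" for s k
    have NS: "N \<notin> S" using S by auto
    show ?thesis
    proof (intro exI[of _ "insert N S"] exI[of _ c'] conjI)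
      show "insert N S \<subseteq> {..<Suc N}" using S by auto
      have nin: "C N \<notin> C ` S" using False MS.span_base[of _ "C ` S"] by blast
      show "inj_on C (insert N S)" using inj nin by (simp add: inj_on_insert NS)
      show "\<not> MS.dependent (C ` insert N S)"
        using ind False nin by (simp add: MS.independent_insert)
      show "\<forall>k<Suc N. C k = (\<Sum>s\<in>insert N S. mat_scale (c' s k) (C s))"
      proof (intro allI impI)
        fix k assume k: "k < Suc N"
        have eq: "(\<Sum>s\<in>S. mat_scale (c' s k) (C s)) = (if k = N then 0 else C k)"
          using rep k NS by (auto simp: c'_def less_Suc_eq intro!: sum.neutral sum.cong)
        show "C k = (\<Sum>s\<in>insert N S. mat_scale (c' s k) (C s))"
          using finS NS eq by (auto simp: c'_def)
      qed
      show "\<forall>s\<in>insert N S. c' s s = 1 \<and> (\<forall>k<s. c' s k = 0)"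
        using nrm S by (auto simp: c'_def)
    qed
  qed
qed





lemma degree_signof_mult': "degree (signof p * (q :: 'a::comm_ring_1 poly)) = degree q"
  by (cases p rule: sign_cases) simp_all

lemma poly_det: "det (map_mat (\<lambda>p. poly p a) A) = poly (det A) a"
proof -
  interpret h: comm_ring_hom "\<lambda>p. poly p a" by unfold_locales auto
  show ?thesis by (rule h.hom_det)
qed

lemma prod_monom1: "finite A \<Longrightarrow> (\<Prod>i\<in>A. monom (1::'a::comm_semiring_1) (f i)) = monom 1 (\<Sum>i\<in>A. f i)"
  by (induction A rule: finite_induct) (auto simp: mult_monom)

lemma det_bound:
  fixes \<omega> :: "'a::field" and s :: "nat \<Rightarrow> nat" and cc :: "nat \<Rightarrow> nat \<Rightarrow> 'a"
  assumes w0: "\<omega> \<noteq> 0" and word: "\<forall>k. 0 < k \<and> k < N \<longrightarrow> \<omega>^k \<noteq> 1"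
    and smono: "\<forall>i j. i < j \<and> j < d \<longrightarrow> s i < s j" and sN: "\<forall>i<d. s i < N"
    and c1: "\<forall>i<d. cc i (s i) = 1" and c0: "\<forall>i<d. \<forall>k<s i. cc i k = 0"
  shows "finite {\<alpha>. det (mat d d (\<lambda>(i,l). \<Sum>k<N. cc i k * (\<omega>^l*\<alpha>)^k)) = 0}
    \<and> card {\<alpha>. det (mat d d (\<lambda>(i,l). \<Sum>k<N. cc i k * (\<omega>^l*\<alpha>)^k)) = 0} \<le> d * (N - 1)"
proof -
  define AP where "AP = mat d d (\<lambda>(i,l). \<Sum>k<N. monom (cc i k * \<omega>^(l*k)) k)"
  define BP where "BP = mat d d (\<lambda>(i,l). \<Sum>k<N. monom (cc i k * \<omega>^(l*k)) (k - s i))"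
  define V where "V = mat d d (\<lambda>(i,l). (\<omega>^(s i))^l)"
  have AP: "AP \<in> carrier_mat d d" and BP: "BP \<in> carrier_mat d d" and V: "V \<in> carrier_mat d d"
    by (auto simp: AP_def BP_def V_def)
  have evalA: "mat d d (\<lambda>(i,l). \<Sum>k<N. cc i k * (\<omega>^l*\<alpha>)^k) = map_mat (\<lambda>p. poly p \<alpha>) AP" for \<alpha>
    by (rule eq_matI) (auto simp: AP_def poly_sum poly_monom power_mult_distrib power_mult mult.assoc)
  have detA: "det (mat d d (\<lambda>(i,l). \<Sum>k<N. cc i k * (\<omega>^l*\<alpha>)^k)) = poly (det AP) \<alpha>" for \<alpha>
    unfolding evalA by (rule poly_det)
  have APBP: "AP $$ (i,l) = monom 1 (s i) * BP $$ (i,l)" if "i < d" "l < d" for i l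
  proof -
    have "monom (cc i k * \<omega>^(l*k)) k = monom 1 (s i) * monom (cc i k * \<omega>^(l*k)) (k - s i)" for k
      using c0 that by (cases "k < s i") (auto simp: mult_monom)
    then show ?thesis using that by (simp add: AP_def BP_def sum_distrib_left)
  qed
  have detAB: "det AP = monom 1 (\<Sum>i\<in>{0..<d}. s i) * det BP"
  proof -
    have "det AP = (\<Sum>p\<in>{p. p permutes {0..<d}}. signof p * (\<Prod>i = 0..<d. AP $$ (i, p i)))"
      by (rule det_def'[OF AP])
    also have "\<dots> = (\<Sum>p\<in>{p. p permutes {0..<d}}. monom 1 (\<Sum>i\<in>{0..<d}. s i) * (signof p * (\<Prod>i = 0..<d. BP $$ (i, p i))))"
    proof (rule sum.cong[OF refl])
      fix p assume "p \<in> {p. p permutes {0..<d}}"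
      then have pd: "i < d \<Longrightarrow> p i < d" for i by (auto dest: permutes_in_image)
      have "(\<Prod>i = 0..<d. AP $$ (i, p i)) = (\<Prod>i = 0..<d. monom 1 (s i) * BP $$ (i, p i))"
        using APBP pd by (intro prod.cong) auto
      also have "\<dots> = monom 1 (\<Sum>i\<in>{0..<d}. s i) * (\<Prod>i = 0..<d. BP $$ (i, p i))"
        by (simp add: prod.distrib prod_monom1)
      finally show "signof p * (\<Prod>i = 0..<d. AP $$ (i, p i)) = monom 1 (\<Sum>i\<in>{0..<d}. s i) * (signof p * (\<Prod>i = 0..<d. BP $$ (i, p i)))"
        by (simp add: ac_simps)
    qed
    also have "\<dots> = monom 1 (\<Sum>i\<in>{0..<d}. s i) * det BP"
      by (simp add: det_def'[OF BP] sum_distrib_left)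
    finally show ?thesis .
  qed
  have BP0: "map_mat (\<lambda>p. poly p 0) BP = V"
  proof (rule eq_matI)
    fix i l assume il: "i < dim_row V" "l < dim_col V"
    then have i: "i < d" and l: "l < d" by (auto simp: V_def)
    have "cc i k * \<omega>^(l*k) * 0^(k - s i) = (if k = s i then \<omega>^(l * s i) else 0)" for k
      using c0 c1 i by (cases "k < s i"; cases "k = s i") auto
    then have "poly (BP $$ (i,l)) 0 = (\<Sum>k<N. if k = s i then \<omega>^(l * s i) else 0)"
      using i l by (simp add: BP_def poly_sum poly_monom)
    also have "\<dots> = (\<omega>^(s i))^l" using sN i by (simp flip: power_mult add: mult.commute)
    finally show "map_mat (\<lambda>p. poly p 0) BP $$ (i, l) = V $$ (i, l)"
      using i l BP by (simp add: V_def)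
  qed (auto simp: BP_def V_def)
  have inj: "inj_on (\<lambda>i. \<omega>^(s i)) {0..<d}"
  proof (rule inj_onI)
    have ne: "\<omega>^(s i) \<noteq> \<omega>^(s j)" if "i < j" "j < d" for i j
    proof
      assume eq: "\<omega>^(s i) = \<omega>^(s j)"
      have lt: "s i < s j" "s j < N" using smono sN that by auto
      have "\<omega>^(s j) = \<omega>^(s i) * \<omega>^(s j - s i)" using lt by (simp flip: power_add)
      with eq w0 have "\<omega>^(s j - s i) = 1" by simp
      with word lt show False by auto
    qed
    fix i j assume "i \<in> {0..<d}" "j \<in> {0..<d}" "\<omega>^(s i) = \<omega>^(s j)"
    then show "i = j" using ne[of i j] ne[of j i] by (cases i j rule: linorder_cases) auto
  qed
  have detV: "det V \<noteq> 0"
  proof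
    assume "det V = 0"
    then obtain v where v: "v \<in> carrier_vec d" "v \<noteq> 0\<^sub>v d" "V *\<^sub>v v = 0\<^sub>v d"
      using det_0_iff_vec_prod_zero_field[OF V] by auto
    define q where "q = (\<Sum>l\<in>{0..<d}. monom (vec_index v l) l)"
    have cq: "coeff q k = (if k < d then vec_index v k else 0)" for k
      by (simp add: q_def coeff_sum coeff_monom)
    obtain l where l: "l < d" "vec_index v l \<noteq> 0"
      using v(1,2) by (metis carrier_vecD eq_vecI index_zero_vec(1,2))
    have q0: "q \<noteq> 0" using l cq[of l] by auto
    have dq: "degree q < d"
    proof -
      have "degree q \<le> d - 1" by (rule degree_le) (auto simp: cq)
      then show ?thesis using l by simp
    qed
    have roots: "(\<lambda>i. \<omega>^(s i)) ` {0..<d} \<subseteq> {x. poly q x = 0}"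
    proof clarify
      fix i assume i: "i \<in> {0..<d}"
      have "vec_index (V *\<^sub>v v) i = 0" using v(3) i by simp
      moreover have "vec_index (V *\<^sub>v v) i = poly q (\<omega>^(s i))"
        using i v(1) by (simp add: V_def scalar_prod_def q_def poly_sum poly_monom mult.commute)
      ultimately show "poly q (\<omega>^(s i)) = 0" by simp
    qed
    have "d = card ((\<lambda>i. \<omega>^(s i)) ` {0..<d})" using card_image[OF inj] by simp
    also have "\<dots> \<le> card {x. poly q x = 0}"
      by (rule card_mono[OF poly_roots_finite[OF q0] roots])
    also have "\<dots> \<le> degree q" by (rule card_poly_roots_bound[OF q0])
    finally show False using dq by simp
  qed
  have "poly (det BP) 0 = det V" using BP0 poly_det[of 0 BP] by simp
  then have "det BP \<noteq> 0" using detV by auto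
  then have AP0: "det AP \<noteq> 0" using detAB by (simp add: monom_eq_0_iff)
  have degA: "degree (det AP) \<le> d * (N - 1)"
  proof -
    have "degree (det AP) \<le> d * (N - 1)"
      unfolding det_def'[OF AP]
    proof (rule degree_sum_le)
      fix p assume p: "p \<in> {p. p permutes {0..<d}}"
      then have pd: "i < d \<Longrightarrow> p i < d" for i by (auto dest: permutes_in_image)
      have "degree (\<Prod>i = 0..<d. AP $$ (i, p i)) \<le> (\<Sum>i = 0..<d. degree (AP $$ (i, p i)))"
        using degree_prod_sum_le[of "{0..<d}" "\<lambda>i. AP $$ (i, p i)"] by (simp add: o_def)
      also have "\<dots> \<le> (\<Sum>i = 0..<d. N - 1)"
      proof (rule sum_mono)
        fix i assume i: "i \<in> {0..<d}"
        show "degree (AP $$ (i, p i)) \<le> N - 1"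
          using i pd[of i] unfolding AP_def
          by (auto intro!: degree_sum_le order.trans[OF degree_monom_le])
      qed
      finally show "degree (signof p * (\<Prod>i = 0..<d. AP $$ (i, p i))) \<le> d * (N - 1)"
        by (simp add: degree_signof_mult')
    qed (simp add: finite_permutations)
    then show ?thesis .
  qed
  have "{\<alpha>. det (mat d d (\<lambda>(i,l). \<Sum>k<N. cc i k * (\<omega>^l*\<alpha>)^k)) = 0} = {\<alpha>. poly (det AP) \<alpha> = 0}"
    using detA by auto
  then show ?thesis
    using poly_roots_finite[OF AP0] card_poly_roots_bound[OF AP0] degA by simp
qed



lemma core:
  fixes C :: "nat \<Rightarrow> 'a::field^'r^'r" and \<omega> :: 'a
  assumes N1: "N \<ge> 1" and w0: "\<omega> \<noteq> 0" and word: "\<forall>k. 0 < k \<and> k < N \<longrightarrow> \<omega>^k \<noteq> 1"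
  defines "P \<equiv> \<lambda>z. \<Sum>k<N. mat_scale (z^k) (C k)"
  shows "(\<forall>\<alpha>. MS.span {P (\<omega>^l*\<alpha>) | l. l < CARD('r)^2} \<subseteq> MS.span (C ` {..<N}))
    \<and> finite {\<alpha>. MS.span {P (\<omega>^l*\<alpha>) | l. l < CARD('r)^2} \<noteq> MS.span (C ` {..<N})}
    \<and> card {\<alpha>. MS.span {P (\<omega>^l*\<alpha>) | l. l < CARD('r)^2} \<noteq> MS.span (C ` {..<N})} < N * CARD('r)^2"
proof -
  define L where "L = CARD('r)^2"
  define U where "U \<alpha> = MS.span {P (\<omega>^l*\<alpha>) | l. l < L}" for \<alpha>
  define V where "V = MS.span (C ` {..<N})"
  have PV: "P z \<in> V" for z
    unfolding P_def V_def by (intro MS.span_sum MS.span_scale MS.span_base) auto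
  have UV: "U \<alpha> \<subseteq> V" for \<alpha>
    unfolding U_def by (rule MS.span_minimal) (auto simp: V_def PV[unfolded V_def])
  obtain S c where S: "S \<subseteq> {..<N}" and inj: "inj_on C S" and ind: "\<not> MS.dependent (C ` S)"
    and rep: "\<forall>k<N. C k = (\<Sum>s\<in>S. mat_scale (c s k) (C s))"
    and nrm: "\<forall>s\<in>S. c s s = 1 \<and> (\<forall>k<s. c s k = 0)"
    using echelon[where C=C and N=N] by blast
  have finS: "finite S" using S finite_subset by blast
  obtain xs where xs: "sorted_wrt (<) xs" "set xs = S"
    using ex1_sorted_list_for_set_if_finite[OF finS] by blast
  have dxs: "distinct xs" using xs(1) strict_sorted_iff by blast
  define d where "d = length xs"
  have dS: "d = card S" using distinct_card[OF dxs] xs(2) d_def by simp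
  define s where "s i = xs ! i" for i
  have sS: "i < d \<Longrightarrow> s i \<in> S" for i using xs(2) by (auto simp: s_def d_def)
  have Ss: "S = s ` {0..<d}" using xs(2) by (auto simp: s_def d_def in_set_conv_nth)
  have smono: "\<forall>i j. i < j \<and> j < d \<longrightarrow> s i < s j"
    using xs(1) by (auto simp: s_def d_def sorted_wrt_iff_nth_less)
  have sinj: "inj_on s {0..<d}"
    using dxs by (auto simp: inj_on_def s_def d_def nth_eq_iff_index_eq)
  have dL: "d \<le> L"
  proof -
    have "card (C ` S) \<le> L" using indep_card[OF ind] by (simp add: L_def)
    then show ?thesis using card_image[OF inj] dS by simp
  qed
  define cc where "cc i k = c (s i) k" for i k
  define Am where "Am \<alpha> = mat d d (\<lambda>(i,l). \<Sum>k<N. cc i k * (\<omega>^l*\<alpha>)^k)" for \<alpha>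
  define Z where "Z = {\<alpha>. det (Am \<alpha>) = 0}"
  have Zb: "finite Z \<and> card Z \<le> d * (N - 1)"
    unfolding Z_def Am_def
    by (rule det_bound[OF w0 word smono]) (use sS S nrm in \<open>auto simp: cc_def\<close>)
  have Prep: "P z = (\<Sum>i\<in>{0..<d}. mat_scale (\<Sum>k<N. cc i k * z^k) (C (s i)))" for z
  proof -
    have "P z = (\<Sum>k<N. \<Sum>t\<in>S. mat_scale (z^k * c t k) (C t))"
      unfolding P_def using rep by (simp add: MS.scale_sum_right)
    also have "\<dots> = (\<Sum>t\<in>S. mat_scale (\<Sum>k<N. c t k * z^k) (C t))"
      by (subst sum.swap) (simp add: MS.scale_sum_left mult.commute)
    also have "\<dots> = (\<Sum>i\<in>{0..<d}. mat_scale (\<Sum>k<N. cc i k * z^k) (C (s i)))"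
      unfolding Ss by (subst sum.reindex[OF sinj]) (simp add: cc_def)
    finally show ?thesis .
  qed
  have good: "U \<alpha> = V" if nz: "\<alpha> \<notin> Z" for \<alpha>
  proof -
    have A: "Am \<alpha> \<in> carrier_mat d d" by (simp add: Am_def)
    have "det (Am \<alpha>) \<noteq> 0" using nz by (simp add: Z_def)
    from det_non_zero_imp_unit[OF A this, of "()"]
    obtain B where B: "B \<in> carrier_mat d d" and AB: "Am \<alpha> * B = 1\<^sub>m d"
      unfolding Units_def ring_mat_def by auto
    have Cs: "C (s j) \<in> U \<alpha>" if j: "j < d" for j
    proof -
      have "(\<Sum>l\<in>{0..<d}. mat_scale (B $$ (l,j)) (P (\<omega>^l*\<alpha>)))
          = (\<Sum>l\<in>{0..<d}. \<Sum>i\<in>{0..<d}. mat_scale (B $$ (l,j) * Am \<alpha> $$ (i,l)) (C (s i)))"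
        by (simp add: Prep MS.scale_sum_right Am_def)
      also have "\<dots> = (\<Sum>i\<in>{0..<d}. mat_scale (\<Sum>l\<in>{0..<d}. Am \<alpha> $$ (i,l) * B $$ (l,j)) (C (s i)))"
        by (subst sum.swap) (simp add: MS.scale_sum_left mult.commute)
      also have "\<dots> = (\<Sum>i\<in>{0..<d}. mat_scale ((Am \<alpha> * B) $$ (i,j)) (C (s i)))"
        using A B j by (intro sum.cong refl) (simp add: scalar_prod_def)
      also have "\<dots> = (\<Sum>i\<in>{0..<d}. mat_scale (if i = j then 1 else 0) (C (s i)))"
        using j by (intro sum.cong refl) (simp add: AB)
      also have "\<dots> = (\<Sum>i\<in>{0..<d}. if i = j then C (s i) else 0)"
        by (intro sum.cong refl) simp
      also have "\<dots> = C (s j)" using j by simp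
      finally have eq: "C (s j) = (\<Sum>l\<in>{0..<d}. mat_scale (B $$ (l,j)) (P (\<omega>^l*\<alpha>)))" ..
      show ?thesis unfolding eq U_def
        by (intro MS.span_sum MS.span_scale MS.span_base) (use dL in auto)
    qed
    have "C ` {..<N} \<subseteq> U \<alpha>"
    proof (rule image_subsetI)
      fix k assume "k \<in> {..<N}"
      then have "C k = (\<Sum>t\<in>S. mat_scale (c t k) (C t))" using rep by auto
      moreover have "(\<Sum>t\<in>S. mat_scale (c t k) (C t)) \<in> U \<alpha>"
        using Cs unfolding Ss U_def by (intro MS.span_sum MS.span_scale) auto
      ultimately show "C k \<in> U \<alpha>" by simp
    qed
    then have "V \<subseteq> U \<alpha>" unfolding V_def by (rule MS.span_minimal) (simp add: U_def)
    with UV show ?thesis by auto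
  qed
  have sub: "{\<alpha>. U \<alpha> \<noteq> V} \<subseteq> Z" using good by auto
  have fin: "finite {\<alpha>. U \<alpha> \<noteq> V}" using Zb sub finite_subset by blast
  have "card {\<alpha>. U \<alpha> \<noteq> V} \<le> d * (N - 1)" using card_mono[OF _ sub] Zb by auto
  also have "\<dots> < N * L"
  proof (cases "d = 0")
    case True then show ?thesis using N1 by (simp add: L_def)
  next
    case False
    then have "d * (N - 1) < d * N" using N1 by simp
    also have "\<dots> \<le> N * L" using dL by simp
    finally show ?thesis .
  qed
  finally have c: "card {\<alpha>. U \<alpha> \<noteq> V} < N * L" .
  have UV': "\<forall>\<alpha>. U \<alpha> \<subseteq> V" using UV by blast
  show ?thesis using UV' fin c unfolding U_def V_def L_def by blast
qed



lemma poly_sum_lt: fixes p :: "'a::comm_ring_1 poly" assumes "degree p < n" shows "poly p x = (\<Sum>i<n. coeff p i * x^i)"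
proof -
  have "(\<Sum>i<n. coeff p i * x^i) = (\<Sum>i\<le>degree p. coeff p i * x^i)"
    by (rule sum.mono_neutral_right) (use assms in \<open>auto simp: coeff_eq_0\<close>)
  then show ?thesis by (simp add: Polynomial.poly_altdef)
qed

lemma lt_sq: fixes i j n :: nat assumes "i < n" "j < n" shows "i + n*j < n^2"
proof -
  have "i + n*j < n + n*j" using assms by simp
  also have "\<dots> = n * (j+1)" by simp
  also have "\<dots> \<le> n * n" using assms by (intro mult_left_mono) auto
  finally show ?thesis by (simp add: power2_eq_square)
qed

lemma div_lt_sq: fixes k n :: nat assumes "k < n^2" shows "k div n < n" "k mod n < n"
proof -
  have n0: "n > 0" using assms by (cases n) auto
  show "k div n < n" using assms by (simp add: power2_eq_square less_mult_imp_div_less)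
  show "k mod n < n" using n0 by simp
qed

lemma sum_sq_reindex:
  fixes g :: "nat \<Rightarrow> 'b::comm_monoid_add"
  shows "(\<Sum>k<n^2. g k) = (\<Sum>i<n. \<Sum>j<n. g (i + n*j))"
proof -
  have bij: "bij_betw (\<lambda>(i,j). i + n*j) ({..<n} \<times> {..<n}) {..<n^2}"
    by (rule bij_betw_byWitness[where f'="\<lambda>k. (k mod n, k div n)"])
       (auto simp: lt_sq div_lt_sq)
  have "(\<Sum>k<n^2. g k) = (\<Sum>x\<in>{..<n} \<times> {..<n}. g ((\<lambda>(i,j). i + n*j) x))"
    by (rule sum.reindex_bij_betw[OF bij, symmetric])
  also have "\<dots> = (\<Sum>i<n. \<Sum>j<n. g (i + n*j))"
    by (simp add: sum.cartesian_product case_prod_beta)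
  finally show ?thesis .
qed

lemma poly_prod_expand:
  fixes p q :: "'a::comm_ring_1 poly"
  assumes "degree p < n" "degree q < n"
  shows "poly p z * poly q (z^n) = (\<Sum>k<n^2. z^k * (coeff p (k mod n) * coeff q (k div n)))"
proof -
  have n0: "n > 0" using assms by auto
  have "poly p z * poly q (z^n) = (\<Sum>i<n. coeff p i * z^i) * (\<Sum>j<n. coeff q j * (z^n)^j)"
    by (simp only: poly_sum_lt[OF assms(1)] poly_sum_lt[OF assms(2)])
  also have "\<dots> = (\<Sum>i<n. \<Sum>j<n. z^(i + n*j) * (coeff p i * coeff q j))"
  proof -
    have pw: "(z^n)^j = z^(n*j)" for j by (rule power_mult[symmetric])
    show ?thesis by (simp add: sum_product power_add pw ac_simps)
  qed
  also have "\<dots> = (\<Sum>k<n^2. z^k * (coeff p (k mod n) * coeff q (k div n)))"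
    using n0 by (simp add: sum_sq_reindex)
  finally show ?thesis .
qed

lemma coeff_prodXY: "coeff_xy (prodXY M N) i j $ a $ b = (\<Sum>c\<in>UNIV. coeff (M$a$c) i * coeff (N$c$b) j)"
  by (simp add: coeff_xy_def prodXY_def matrix_matrix_mult_def polyX_def polyY_def coeff_sum coeff_map_poly mult.commute)

lemma evalP:
  fixes M N :: "'a::field poly^'r^'r"
  assumes "\<forall>a b. degree (M$a$b) < n" "\<forall>a b. degree (N$a$b) < n"
  shows "eval_mat M z ** eval_mat N (z^n) = (\<Sum>k<n^2. mat_scale (z^k) (coeff_xy (prodXY M N) (k mod n) (k div n)))"
proof -
  have "(\<Sum>c\<in>UNIV. poly (M$a$c) z * poly (N$c$b) (z^n)) = (\<Sum>k<n^2. z^k * coeff_xy (prodXY M N) (k mod n) (k div n) $ a $ b)" for a b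
    by (simp add: poly_prod_expand assms coeff_prodXY sum_distrib_left sum.swap[of _ UNIV])
  then show ?thesis
    by (simp add: Finite_Cartesian_Product.vec_eq_iff matrix_matrix_mult_def eval_mat_def mat_scale_def)
qed

lemma coeff_set: "{coeff_xy (prodXY M N) i j | i j. i < n \<and> j < n} = (\<lambda>k. coeff_xy (prodXY M N) (k mod n) (k div n)) ` {..<n^2}"
proof (intro equalityI subsetI)
  fix x assume "x \<in> {coeff_xy (prodXY M N) i j | i j. i < n \<and> j < n}"
  then obtain i j where ij: "i < n" "j < n" "x = coeff_xy (prodXY M N) i j" by blast
  have "i + n*j < n^2"
  proof -
    have "i + n*j < n + n*j" using ij by simp
    also have "\<dots> = n * (j+1)" by simp
    also have "\<dots> \<le> n * n" using ij by (intro mult_left_mono) auto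
    finally show ?thesis by (simp add: power2_eq_square)
  qed
  moreover have "(i + n*j) mod n = i" "(i + n*j) div n = j" using ij by auto
  ultimately show "x \<in> (\<lambda>k. coeff_xy (prodXY M N) (k mod n) (k div n)) ` {..<n^2}"
    using ij by (metis (no_types, lifting) image_eqI lessThan_iff)
next
  fix x assume "x \<in> (\<lambda>k. coeff_xy (prodXY M N) (k mod n) (k div n)) ` {..<n^2}"
  then obtain k where k: "k < n^2" "x = coeff_xy (prodXY M N) (k mod n) (k div n)" by blast
  then have n0: "n > 0" by (cases n) auto
  have "k div n < n" using k by (simp add: power2_eq_square less_mult_imp_div_less)
  then show "x \<in> {coeff_xy (prodXY M N) i j | i j. i < n \<and> j < n}" using k n0 div_lt_sq[OF k(1)] by blast
qed

theorem lemma3p5: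
  fixes M N :: "'a::field poly^'r^'r" and n :: nat and \<omega> :: 'a
  assumes "n \<ge> 1"
    and "\<forall>a b. degree (M$a$b) < n"
    and "\<forall>a b. degree (N$a$b) < n"
    and "ord_ge \<omega> (n^2)"
  shows "(\<forall>\<alpha>::'a. mat_span {eval_mat M (\<omega>^l * \<alpha>) ** eval_mat N ((\<omega>^l * \<alpha>)^n) | l. l < CARD('r)^2}
            \<subseteq> mat_span {coeff_xy (prodXY M N) i j | i j. i < n \<and> j < n})
       \<and> finite {\<alpha>::'a. mat_span {eval_mat M (\<omega>^l * \<alpha>) ** eval_mat N ((\<omega>^l * \<alpha>)^n) | l. l < CARD('r)^2}
            \<noteq> mat_span {coeff_xy (prodXY M N) i j | i j. i < n \<and> j < n}}
       \<and> card {\<alpha>::'a. mat_span {eval_mat M (\<omega>^l * \<alpha>) ** eval_mat N ((\<omega>^l * \<alpha>)^n) | l. l < CARD('r)^2}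
            \<noteq> mat_span {coeff_xy (prodXY M N) i j | i j. i < n \<and> j < n}} < n^2 * CARD('r)^2"
proof -
  define C where "C k = coeff_xy (prodXY M N) (k mod n) (k div n)" for k
  have w: "\<omega> \<noteq> 0" "\<forall>k. 0 < k \<and> k < n^2 \<longrightarrow> \<omega>^k \<noteq> 1" using assms(4) by (auto simp: ord_ge_def)
  have N1: "n^2 \<ge> 1" using assms(1) by simp
  have E: "eval_mat M z ** eval_mat N (z^n) = (\<Sum>k<n^2. mat_scale (z^k) (C k))" for z
    unfolding C_def by (rule evalP[OF assms(2,3)])
  have S: "{coeff_xy (prodXY M N) i j | i j. i < n \<and> j < n} = C ` {..<n^2}"
    unfolding C_def by (rule coeff_set)
  show ?thesis
    unfolding E S mat_span_eq
    by (rule core[where C=C and N="n^2", OF N1 w])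
qed


end
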